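(* Let $a$ and $p$ be trigonometric polynomials such that $a$ satisfies the UEP identities with trigonometric polynomials $b_1,\dots,b_{J_a}$, and $p$ satisfies the UEP identities with trigonometric polynomials $q_1,\dots,q_{J_p}$. Then the product $ap$ satisfies the UEP identities with the family \[\{p\,b_j : j=1,\dots,J_a\}\cup\{a\,q_j : j=1,\dots,J_p\}\cup\{q_j\,b_k : j=1,\dots,J_p,\ k=1,\dots,J_a\}.\] Moreover, if the subdivision schemes associated to $a$, $p$ and $ap$ are convergent and the families $b_1,\dots,b_{J_a}$ and $q_1,\dots,q_{J_p}$ have $v_a$ and $v_p$ vanishing moments respectively, then the family above (for $ap$) has $v=\min\{v_a,v_p\}$ vanishing moments.
   Context: Trigonometric polynomials are written as $p(\omega)=\frac12\sum_{k\in\mathbb{Z}}\mathbf{p}(k)e^{i2k\pi\omega}$ with finitely supported coefficient sequence (mask) $\mathbf{p}$, $\omega\in[0,1)$. A trigonometric polynomial $p$ satisfies the UEP identities with trigonometric polynomials $q_1,\dots,q_J$ if for all $\omega\in[0,1)$: $p(\omega)\overline{p(\omega)}+\sum_{j=1}^J q_j(\omega)\overline{q_j(\omega)}=1$ and $p(\omega)\overline{p(\omega-1/2)}+\sum_{j=1}^J q_j(\omega)\overline{q_j(\omega-1/2)}=0$. The subdivision scheme associated to $p$ is the stationary scheme on $\mathbb{Z}$ with bi-infinite matrix $\mathbf{P}(k,m)=\mathbf{p}(k-2m)$; it is convergent if for each $k$ there is a continuous $\varphi_k$ with $\sup_m|\varphi_k(2^{-j}m)-(\mathbf{P}^j\delta_k)(m)|\to0$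 as $j\to\infty$ ($\delta_k$ the unit sequence at $k$). The number of vanishing moments of a family $q_1,\dots,q_J$ is $v=\min_{j}\mu_j$, where $\mu_j$ is the order of the zero of $q_j$ at $\omega=0$, i.e. $q_j^{(k)}(0)=0$ for $k=0,\dots,\mu_j-1$ and $q_j^{(\mu_j)}(0)\neq0$. *)

theory Defs
  imports "HOL-Analysis.Analysis"
begin

text \<open>The trigonometric
polynomial with mask m, p(w) = 1/2 * sum_k m(k) e^(i 2 k pi w), is extended
to complex arguments (it is entire) so that iterated derivatives are available.\<close>

definition fin_supp :: "(int \<Rightarrow> complex) \<Rightarrow> bool" where
  "fin_supp m \<longleftrightarrow> finite {k. m k \<noteq> 0}"

definition tp :: "(int \<Rightarrow> complex) \<Rightarrow> complex \<Rightarrow> complex" where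
  "tp m w = (1/2) * (\<Sum>k\<in>{k. m k \<noteq> 0}. m k * exp (\<i> * 2 * of_int k * of_real pi * w))"

text \<open>Mask of the product of two trigonometric polynomials:
tp (mask_mult a p) = tp a * tp p.\<close>
definition mask_mult :: "(int \<Rightarrow> complex) \<Rightarrow> (int \<Rightarrow> complex) \<Rightarrow> int \<Rightarrow> complex" where
  "mask_mult a p k = (1/2) * (\<Sum>l\<in>{l. a l \<noteq> 0}. a l * p (k - l))"

definition UEP :: "(int \<Rightarrow> complex) \<Rightarrow> (int \<Rightarrow> complex) list \<Rightarrow> bool" where
  "UEP p qs \<longleftrightarrow> (\<forall>w::real. 0 \<le> w \<and> w < 1 \<longrightarrow>
      tp p (of_real w) * cnj (tp p (of_real w))
        + (\<Sum>q\<leftarrow>qs. tp q (of_real w) * cnj (tp q (of_real w))) = 1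
    \<and> tp p (of_real w) * cnj (tp p (of_real (w - 1/2)))
        + (\<Sum>q\<leftarrow>qs. tp q (of_real w) * cnj (tp q (of_real (w - 1/2)))) = 0)"

definition subdiv_step :: "(int \<Rightarrow> complex) \<Rightarrow> (int \<Rightarrow> complex) \<Rightarrow> int \<Rightarrow> complex" where
  "subdiv_step p c k = (\<Sum>m\<in>{m. p (k - 2 * m) \<noteq> 0}. p (k - 2 * m) * c m)"

definition unit_seq :: "int \<Rightarrow> int \<Rightarrow> complex" where
  "unit_seq k m = (if m = k then 1 else 0)"

definition subdiv_convergent :: "(int \<Rightarrow> complex) \<Rightarrow> bool" where
  "subdiv_convergent p \<longleftrightarrow> (\<forall>k::int. \<exists>\<phi>::real \<Rightarrow> complex. continuous_on UNIV \<phi> \<and>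
     (\<forall>\<epsilon>>0. \<exists>N. \<forall>j\<ge>N. \<forall>m::int.
        norm (\<phi> (of_int m / 2 ^ j) - ((subdiv_step p ^^ j) (unit_seq k)) m) < \<epsilon>))"

text \<open>The family qs has exactly v vanishing moments: v is the minimum over j of the
order of the zero of q_j at 0 (all derivatives of order < v vanish for every q_j,
and some q_j has nonzero derivative of order v).\<close>
definition vanishing_moments :: "(int \<Rightarrow> complex) list \<Rightarrow> nat \<Rightarrow> bool" where
  "vanishing_moments qs v \<longleftrightarrow>
     (\<forall>q\<in>set qs. \<forall>k<v. (deriv ^^ k) (tp q) 0 = 0) \<and>
     (\<exists>q\<in>set qs. (deriv ^^ v) (tp q) 0 \<noteq> 0)"

end

theory Submission imports Defs "HOL-Complex_Analysis.Complex_Analysis"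
begin

definition EE :: "int \<Rightarrow> complex \<Rightarrow> complex" where
  "EE k w = exp (\<i> * 2 * of_int k * of_real pi * w)"

lemma EE_add: "EE (n + l) w = EE n w * EE l w"
  unfolding EE_def by (simp add: exp_add[symmetric] algebra_simps)

lemma tp_superset:
  assumes "finite S" "{k. m k \<noteq> 0} \<subseteq> S"
  shows "tp m w = 1/2 * (\<Sum>k\<in>S. m k * EE k w)"
proof -
  have "(\<Sum>k\<in>{k. m k \<noteq> 0}. m k * EE k w) = (\<Sum>k\<in>S. m k * EE k w)"
    by (rule sum.mono_neutral_left) (use assms in auto)
  then show ?thesis unfolding tp_def EE_def by simp
qed

lemma mm_superset:
  assumes "finite S" "{k. a k \<noteq> 0} \<subseteq> S"
  shows "mask_mult a p k = 1/2 * (\<Sum>l\<in>S. a l * p (k - l))"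
proof -
  have "(\<Sum>l\<in>{k. a k \<noteq> 0}. a l * p (k - l)) = (\<Sum>l\<in>S. a l * p (k - l))"
    by (rule sum.mono_neutral_left) (use assms in auto)
  then show ?thesis unfolding mask_mult_def by simp
qed

lemma fin_supp_mm:
  assumes "fin_supp a" "fin_supp p"
  shows "{k. mask_mult a p k \<noteq> 0} \<subseteq> (\<lambda>(l,n). l+n) ` ({k. a k \<noteq> 0} \<times> {k. p k \<noteq> 0})"
proof
  fix k assume "k \<in> {k. mask_mult a p k \<noteq> 0}"
  then have "(\<Sum>l\<in>{l. a l \<noteq> 0}. a l * p (k - l)) \<noteq> 0" unfolding mask_mult_def by simp
  then obtain l where "a l \<noteq> 0" "p (k - l) \<noteq> 0"
  proof -
    from sum.not_neutral_contains_not_neutral[OF \<open>(\<Sum>l\<in>{l. a l \<noteq> 0}. a l * p (k - l)) \<noteq> 0\<close>]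
    obtain l where "l \<in> {l. a l \<noteq> 0}" "a l * p (k - l) \<noteq> 0" by blast
    then show ?thesis using that by simp
  qed
  then show "k \<in> (\<lambda>(l,n). l+n) ` ({k. a k \<noteq> 0} \<times> {k. p k \<noteq> 0})"
    by (auto intro!: image_eqI[of _ _ "(l, k - l)"])
qed

lemma fin_supp_mask_mult:
  assumes "fin_supp a" "fin_supp p"
  shows "fin_supp (mask_mult a p)"
proof -
  have "finite ((\<lambda>(l,n). l+n) ` ({k. a k \<noteq> 0} \<times> {k. p k \<noteq> 0}))"
    using assms unfolding fin_supp_def by (intro finite_imageI finite_cartesian_product)
  then show ?thesis unfolding fin_supp_def by (rule finite_subset[OF fin_supp_mm[OF assms]])
qed

lemma s1: "(1/2::complex) * (\<Sum>k\<in>T. (1/2 * (\<Sum>l\<in>Sa. a l * p (k - l))) * E k) = 1/2 * (\<Sum>k\<in>T. \<Sum>l\<in>Sa. 1/2 * (a l * p (k - l) * E k))"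
  by (simp only: sum_distrib_left sum_distrib_right mult.assoc)
lemma s2: "(1/2::complex) * (\<Sum>l\<in>Sa. \<Sum>k\<in>T. 1/2 * (a l * p (k - l) * E k)) = 1/2 * (\<Sum>l\<in>Sa. 1/2 * a l * (\<Sum>k\<in>T. p (k - l) * E k))"
  by (simp only: sum_distrib_left mult.assoc)
lemma s3: "(1/2::complex) * (\<Sum>l\<in>Sa. 1/2 * a l * X l) = 1/4 * (\<Sum>l\<in>Sa. a l * X l)"
  by (simp only: sum_distrib_left mult.assoc) simp
lemma s4: "(1/4::complex) * (\<Sum>l\<in>Sa. a l * (E l * (2 * t))) = (1/2 * (\<Sum>l\<in>Sa. a l * E l)) * t"
  by (simp add: sum_distrib_left sum_distrib_right mult_ac)

lemma tp_mult:
  assumes "fin_supp a" "fin_supp p"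
  shows "tp (mask_mult a p) w = tp a w * tp p w"
proof -
  define Sa where "Sa = {k. a k \<noteq> 0}"
  define Sp where "Sp = {k. p k \<noteq> 0}"
  define T where "T = (\<lambda>(l,n). l+n) ` (Sa \<times> Sp)"
  have fa: "finite Sa" and fp: "finite Sp" using assms unfolding fin_supp_def Sa_def Sp_def by auto
  have fT: "finite T" unfolding T_def using fa fp by auto
  have sT: "{k. mask_mult a p k \<noteq> 0} \<subseteq> T" unfolding T_def Sa_def Sp_def by (rule fin_supp_mm[OF assms])
  have inner: "(\<Sum>k\<in>T. p (k - l) * EE k w) = EE l w * (2 * tp p w)" if l: "l \<in> Sa" for l
  proof -
    have "(\<Sum>k\<in>T. p (k - l) * EE k w) = (\<Sum>k\<in>(\<lambda>n. n + l) ` Sp. p (k - l) * EE k w)"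
    proof (rule sum.mono_neutral_right[OF fT])
      show "(\<lambda>n. n + l) ` Sp \<subseteq> T" unfolding T_def
      proof
        fix k assume "k \<in> (\<lambda>n. n + l) ` Sp"
        then obtain n where "n \<in> Sp" "k = n + l" by blast
        then have "k = (\<lambda>(l,n). l+n) (l, n)" "(l, n) \<in> Sa \<times> Sp" using l by auto
        then show "k \<in> (\<lambda>(l,n). l+n) ` (Sa \<times> Sp)" by blast
      qed
      show "\<forall>k\<in>T - (\<lambda>n. n + l) ` Sp. p (k - l) * EE k w = 0"
      proof
        fix k assume "k \<in> T - (\<lambda>n. n + l) ` Sp"
        then have kn: "k \<notin> (\<lambda>n. n + l) ` Sp" by blast
        have "k - l \<notin> Sp"
        proof
          assume "k - l \<in> Sp"
          then have "(k - l) + l \<in> (\<lambda>n. n + l) ` Sp" by (rule imageI)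
          then show False using kn by simp
        qed
        then show "p (k - l) * EE k w = 0" by (simp add: Sp_def)
      qed
    qed
    also have "\<dots> = (\<Sum>n\<in>Sp. p n * EE (n + l) w)"
      by (subst sum.reindex) (auto simp: inj_on_def)
    also have "\<dots> = EE l w * (\<Sum>n\<in>Sp. p n * EE n w)"
      by (simp only: EE_add sum_distrib_left mult_ac)
    also have "\<dots> = EE l w * (2 * tp p w)"
    proof -
      have h: "tp p w = 1/2 * (\<Sum>n\<in>Sp. p n * EE n w)"
        by (rule tp_superset[OF fp]) (simp add: Sp_def)
      have "(\<Sum>n\<in>Sp. p n * EE n w) = 2 * tp p w" by (subst h) simp
      then show ?thesis by (simp only:)
    qed
    finally show ?thesis .
  qed
  have "tp (mask_mult a p) w = 1/2 * (\<Sum>k\<in>T. mask_mult a p k * EE k w)"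
    by (rule tp_superset[OF fT sT])
  also have "\<dots> = 1/2 * (\<Sum>k\<in>T. (1/2 * (\<Sum>l\<in>Sa. a l * p (k - l))) * EE k w)"
    by (rule arg_cong[where f="\<lambda>x. 1/2 * x"], rule sum.cong, rule refl, subst mm_superset[OF fa], simp_all add: Sa_def)
  also have "\<dots> = 1/2 * (\<Sum>k\<in>T. \<Sum>l\<in>Sa. 1/2 * (a l * p (k - l) * EE k w))"
    by (rule s1)
  also have "\<dots> = 1/2 * (\<Sum>l\<in>Sa. \<Sum>k\<in>T. 1/2 * (a l * p (k - l) * EE k w))"
    by (subst sum.swap) (rule refl)
  also have "\<dots> = 1/2 * (\<Sum>l\<in>Sa. 1/2 * a l * (\<Sum>k\<in>T. p (k - l) * EE k w))"
    by (rule s2)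
  also have "\<dots> = 1/4 * (\<Sum>l\<in>Sa. a l * (\<Sum>k\<in>T. p (k - l) * EE k w))"
    by (rule s3)
  also have "\<dots> = 1/4 * (\<Sum>l\<in>Sa. a l * (EE l w * (2 * tp p w)))"
    by (rule arg_cong[where f="\<lambda>x. 1/4 * x"], rule sum.cong, simp_all add: inner)
  also have "\<dots> = (1/2 * (\<Sum>l\<in>Sa. a l * EE l w)) * tp p w"
    by (rule s4)
  also have "\<dots> = tp a w * tp p w"
    by (subst tp_superset[OF fa, of a w]) (simp_all add: Sa_def)
  finally show ?thesis .
qed




definition GG :: "real \<Rightarrow> real \<Rightarrow> (int \<Rightarrow> complex) \<Rightarrow> complex" where
  "GG w w' m = tp m (of_real w) * cnj (tp m (of_real w'))"

lemma GG_mult: "fin_supp x \<Longrightarrow> fin_supp y \<Longrightarrow> GG w w' (mask_mult x y) = GG w w' x * GG w w' y"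
  unfolding GG_def by (simp add: tp_mult mult_ac)

lemma sum_map_mm:
  assumes "\<forall>b\<in>set bs. fin_supp b" "fin_supp x"
  shows "sum_list (map (GG w w') (map (\<lambda>b. mask_mult x b) bs)) = GG w w' x * sum_list (map (GG w w') bs)"
  using assms by (induction bs) (simp_all add: GG_mult distrib_left)

lemma sum_concat_mm:
  assumes "\<forall>b\<in>set bs. fin_supp b" "\<forall>q\<in>set qs. fin_supp q"
  shows "sum_list (map (GG w w') (concat (map (\<lambda>q. map (\<lambda>b. mask_mult q b) bs) qs)))
     = sum_list (map (GG w w') qs) * sum_list (map (GG w w') bs)"
  using assms(2) proof (induction qs)
  case Nil then show ?case by simp
next
  case (Cons q qs)
  then show ?case using sum_map_mm[OF assms(1), of q w w'] by (simp add: distrib_right)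
qed

lemma fam_sum:
  assumes "fin_supp a" "fin_supp p" "\<forall>b\<in>set bs. fin_supp b" "\<forall>q\<in>set qs. fin_supp q"
  shows "GG w w' (mask_mult a p) + sum_list (map (GG w w') (map (\<lambda>b. mask_mult p b) bs @ map (\<lambda>q. mask_mult a q) qs
             @ concat (map (\<lambda>q. map (\<lambda>b. mask_mult q b) bs) qs)))
     = (GG w w' a + sum_list (map (GG w w') bs)) * (GG w w' p + sum_list (map (GG w w') qs))"
proof -
  have e1: "sum_list (map (GG w w') (map (\<lambda>b. mask_mult p b) bs)) = GG w w' p * sum_list (map (GG w w') bs)"
    by (rule sum_map_mm[OF assms(3,2)])
  have e2: "sum_list (map (GG w w') (map (\<lambda>q. mask_mult a q) qs)) = GG w w' a * sum_list (map (GG w w') qs)"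
    by (rule sum_map_mm[OF assms(4,1)])
  note e3 = sum_concat_mm[OF assms(3,4), of w w']
  show ?thesis
    by (simp only: map_append sum_list_append e1 e2 e3 GG_mult[OF assms(1,2)]) (simp add: algebra_simps)
qed

lemma UEP_iff: "UEP p qs \<longleftrightarrow> (\<forall>w::real. 0 \<le> w \<and> w < 1 \<longrightarrow>
   GG w w p + sum_list (map (GG w w) qs) = 1 \<and> GG w (w - 1/2) p + sum_list (map (GG w (w - 1/2)) qs) = 0)"
proof -
  have "\<And>w w'. (\<lambda>q. tp q (of_real w) * cnj (tp q (of_real w'))) = GG w w'"
    by (rule ext) (simp add: GG_def)
  then show ?thesis unfolding UEP_def GG_def[symmetric] by simp
qed

lemma UEP_prod:
  assumes "fin_supp a" "fin_supp p" "\<forall>b\<in>set bs. fin_supp b" "\<forall>q\<in>set qs. fin_supp q"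
    and "UEP a bs" and "UEP p qs"
  shows "UEP (mask_mult a p)
           (map (\<lambda>b. mask_mult p b) bs @ map (\<lambda>q. mask_mult a q) qs
             @ concat (map (\<lambda>q. map (\<lambda>b. mask_mult q b) bs) qs))"
  using assms(5,6) unfolding UEP_iff fam_sum[OF assms(1-4)] by simp

lemma tp_holo: "tp m holomorphic_on UNIV"
  unfolding tp_def by (intro holomorphic_intros)

abbreviation DD :: "nat \<Rightarrow> (int \<Rightarrow> complex) \<Rightarrow> complex" where
  "DD k m \<equiv> (deriv ^^ k) (tp m) 0"

lemma DD_mult:
  assumes "fin_supp x" "fin_supp y"
  shows "DD k (mask_mult x y) = (\<Sum>i = 0..k. of_nat (k choose i) * DD i x * DD (k-i) y)"
proof -
  have "tp (mask_mult x y) = (\<lambda>z. tp x z * tp y z)"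
    by (rule ext) (rule tp_mult[OF assms])
  then show ?thesis
    using higher_deriv_mult[OF tp_holo tp_holo open_UNIV, of 0 k] by simp
qed

lemma DD_zero:
  assumes "fin_supp x" "fin_supp y" "\<forall>i<r. DD i x = 0" "\<forall>i<s. DD i y = 0" "k < r + s"
  shows "DD k (mask_mult x y) = 0"
  unfolding DD_mult[OF assms(1,2)]
proof (rule sum.neutral, rule ballI)
  fix i assume ik: "i \<in> {0..k}"
  show "of_nat (k choose i) * DD i x * DD (k-i) y = 0"
  proof (cases "i < r")
    case True then show ?thesis using assms(3) by simp
  next
    case False then have "k - i < s" using assms(5) ik by auto
    then show ?thesis using assms(4) by simp
  qed
qed

lemma DD_left:
  assumes "fin_supp x" "fin_supp y" "\<forall>i<r. DD i x = 0"
  shows "DD r (mask_mult x y) = DD r x * tp y 0"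
proof -
  have "DD r (mask_mult x y) = of_nat (r choose r) * DD r x * DD (r-r) y
      + (\<Sum>i \<in> {0..r} - {r}. of_nat (r choose i) * DD i x * DD (r-i) y)"
    unfolding DD_mult[OF assms(1,2)] by (rule sum.remove) auto
  also have "(\<Sum>i \<in> {0..r} - {r}. of_nat (r choose i) * DD i x * DD (r-i) y) = 0"
    using assms(3) by (intro sum.neutral) auto
  finally show ?thesis by simp
qed

lemma DD_right:
  assumes "fin_supp x" "fin_supp y" "\<forall>i<s. DD i y = 0"
  shows "DD s (mask_mult x y) = tp x 0 * DD s y"
proof -
  have "DD s (mask_mult x y) = of_nat (s choose 0) * DD 0 x * DD (s-0) y
      + (\<Sum>i \<in> {0..s} - {0}. of_nat (s choose i) * DD i x * DD (s-i) y)"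
    unfolding DD_mult[OF assms(1,2)] by (rule sum.remove) auto
  also have "(\<Sum>i \<in> {0..s} - {0}. of_nat (s choose i) * DD i x * DD (s-i) y) = 0"
    using assms(3) by (intro sum.neutral) auto
  finally show ?thesis by simp
qed


lemma GG00_zero:
  assumes "\<forall>q\<in>set qs. tp q 0 = 0"
  shows "sum_list (map (GG 0 0) qs) = 0"
  using assms by (induction qs) (auto simp: GG_def)

lemma tp0_nonzero:
  assumes "UEP p qs" "\<forall>q\<in>set qs. tp q 0 = 0"
  shows "tp p 0 \<noteq> 0"
proof
  assume "tp p 0 = 0"
  then have "GG 0 0 p = 0" by (simp add: GG_def)
  moreover have "GG 0 0 p + sum_list (map (GG 0 0) qs) = 1"
    using assms(1) unfolding UEP_iff by (metis order_refl zero_less_one)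
  ultimately show False using GG00_zero[OF assms(2)] by simp
qed

theorem theorem2:
  fixes a p :: "int \<Rightarrow> complex" and bs qs :: "(int \<Rightarrow> complex) list" and va vp :: nat
  assumes "fin_supp a" and "fin_supp p"
    and "\<forall>b\<in>set bs. fin_supp b" and "\<forall>q\<in>set qs. fin_supp q"
    and "UEP a bs" and "UEP p qs"
  shows "UEP (mask_mult a p)
           (map (\<lambda>b. mask_mult p b) bs @ map (\<lambda>q. mask_mult a q) qs
             @ concat (map (\<lambda>q. map (\<lambda>b. mask_mult q b) bs) qs))
       \<and> (subdiv_convergent a \<and> subdiv_convergent p \<and> subdiv_convergent (mask_mult a p)
          \<and> vanishing_moments bs va \<and> vanishing_moments qs vp
          \<longrightarrow> vanishing_moments
                (map (\<lambda>b. mask_mult p b) bs @ map (\<lambda>q. mask_mult a q) qs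
                  @ concat (map (\<lambda>q. map (\<lambda>b. mask_mult q b) bs) qs))
                (min va vp))"
proof (intro conjI impI)
  show "UEP (mask_mult a p)
           (map (\<lambda>b. mask_mult p b) bs @ map (\<lambda>q. mask_mult a q) qs
             @ concat (map (\<lambda>q. map (\<lambda>b. mask_mult q b) bs) qs))"
    by (rule UEP_prod[OF assms])
next
  assume H: "subdiv_convergent a \<and> subdiv_convergent p \<and> subdiv_convergent (mask_mult a p)
          \<and> vanishing_moments bs va \<and> vanishing_moments qs vp"
  then have vb: "vanishing_moments bs va" and vq: "vanishing_moments qs vp" by auto
  from vb have b0: "\<forall>b\<in>set bs. \<forall>k<va. DD k b = 0" and b1: "\<exists>b\<in>set bs. DD va b \<noteq> 0"
    unfolding vanishing_moments_def by auto
  from vq have q0: "\<forall>q\<in>set qs. \<forall>k<vp. DD k q = 0" and q1: "\<exists>q\<in>set qs. DD vp q \<noteq> 0"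
    unfolding vanishing_moments_def by auto
  have fb: "\<And>b. b \<in> set bs \<Longrightarrow> fin_supp b" and fq: "\<And>q. q \<in> set qs \<Longrightarrow> fin_supp q"
    using assms(3,4) by auto
  have z: "\<forall>i<0. DD i m = 0" for m :: "int \<Rightarrow> complex" by simp
  have pnz: "tp p 0 \<noteq> 0" if "1 \<le> vp"
  proof (rule tp0_nonzero[OF assms(6)])
    show "\<forall>q\<in>set qs. tp q 0 = 0"
    proof
      fix q assume "q \<in> set qs"
      then have "\<forall>k<vp. DD k q = 0" using q0 by blast
      moreover have "0 < vp" using that by simp
      ultimately have "DD 0 q = 0" by blast
      then show "tp q 0 = 0" by simp
    qed
  qed
  have anz: "tp a 0 \<noteq> 0" if "1 \<le> va"
  proof (rule tp0_nonzero[OF assms(5)])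
    show "\<forall>q\<in>set bs. tp q 0 = 0"
    proof
      fix q assume "q \<in> set bs"
      then have "\<forall>k<va. DD k q = 0" using b0 by blast
      moreover have "0 < va" using that by simp
      ultimately have "DD 0 q = 0" by blast
      then show "tp q 0 = 0" by simp
    qed
  qed
  let ?F = "map (\<lambda>b. mask_mult p b) bs @ map (\<lambda>q. mask_mult a q) qs
                  @ concat (map (\<lambda>q. map (\<lambda>b. mask_mult q b) bs) qs)"
  show "vanishing_moments ?F (min va vp)"
    unfolding vanishing_moments_def
  proof (intro conjI)
    show "\<forall>m\<in>set ?F. \<forall>k<min va vp. DD k m = 0"
    proof (intro ballI allI impI)
      fix m k assume m: "m \<in> set ?F" and k: "k < min va vp"
      from m consider (1) b where "b \<in> set bs" "m = mask_mult p b"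
        | (2) q where "q \<in> set qs" "m = mask_mult a q"
        | (3) q b where "q \<in> set qs" "b \<in> set bs" "m = mask_mult q b"
        by auto
      then show "DD k m = 0"
      proof cases
        case 1
        then show ?thesis using DD_zero[OF assms(2) fb[OF 1(1)] z, of va k] b0 k by auto
      next
        case 2
        then show ?thesis using DD_zero[OF assms(1) fq[OF 2(1)] z, of vp k] q0 k by auto
      next
        case 3
        then show ?thesis using DD_zero[OF fq[OF 3(1)] fb[OF 3(2)], of vp va k] q0 b0 k by auto
      qed
    qed
  next
    show "\<exists>m\<in>set ?F. DD (min va vp) m \<noteq> 0"
    proof (cases "vp < va")
      case True
      then have "1 \<le> va" by simp
      from q1 obtain q where q: "q \<in> set qs" "DD vp q \<noteq> 0" by blast
      have "DD vp (mask_mult a q) = tp a 0 * DD vp q"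
        by (rule DD_right[OF assms(1) fq[OF q(1)]]) (use q0 q(1) in auto)
      then have "DD (min va vp) (mask_mult a q) \<noteq> 0" using True q(2) anz[OF \<open>1 \<le> va\<close>] by simp
      moreover have "mask_mult a q \<in> set ?F" using q(1) by auto
      ultimately show ?thesis by blast
    next
      case False
      show ?thesis
      proof (cases "1 \<le> vp")
        case True
        from b1 obtain b where b: "b \<in> set bs" "DD va b \<noteq> 0" by blast
        have "DD va (mask_mult p b) = tp p 0 * DD va b"
          by (rule DD_right[OF assms(2) fb[OF b(1)]]) (use b0 b(1) in auto)
        then have "DD (min va vp) (mask_mult p b) \<noteq> 0" using False b(2) pnz[OF True] by simp
        moreover have "mask_mult p b \<in> set ?F" using b(1) by auto
        ultimately show ?thesis by blast
      next
        case False2: False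
        then have "vp = 0" "va = 0" using False by auto
        from b1 obtain b where b: "b \<in> set bs" "DD va b \<noteq> 0" by blast
        from q1 obtain q where q: "q \<in> set qs" "DD vp q \<noteq> 0" by blast
        have "DD 0 (mask_mult q b) = DD 0 q * tp b 0"
          by (rule DD_left[OF fq[OF q(1)] fb[OF b(1)]]) simp
        then have "DD (min va vp) (mask_mult q b) \<noteq> 0" using b(2) q(2) \<open>vp = 0\<close> \<open>va = 0\<close> by simp
        moreover have "mask_mult q b \<in> set ?F" using b(1) q(1) by auto
        ultimately show ?thesis by blast
      qed
    qed
  qed
qed

end
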